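(* Let $n\ge 2$, let $U\subseteq\mathbb{R}^n$ be an open cone (i.e. $\lambda x\in U$ for all $x\in U$, $\lambda>0$), and let $f$ be a smooth function on $U$ which is homogeneous of degree $d>1$ (i.e. $f(\lambda x)=\lambda^d f(x)$ for all $\lambda>0$), with $f>0$ on $U$ and $\det(\partial^2 f/\partial x_i\partial x_j)\neq 0$ on $U$. Give $U$ the pseudo-Riemannian metric $g_{ij}=-\frac{1}{d(d-1)}\,\partial^2 f/\partial x_i\partial x_j$, and give the hypersurface $M=\{x\in U: f(x)=1\}$ the restricted (nondegenerate) metric. Then the map $\varphi(t,x)=t^{2/d}x$ is an isometry from the warped product $(4/d^2)\big((-1)\mathbb{R}^{>0}\times_t (d^2/4)M\big)$ onto $U$.
   Context: For a pseudo-Riemannian manifold $N$ and a real number $a\neq 0$, $aN$ denotes the same manifold with inner product multiplied by $a$: $\langle v,w\rangle_{aN}=a\langle v,w\rangle_N$. For a pseudo-Riemannian manifold $N$, the warped product $(-1)\mathbb{R}^{>0}\times_t N$ is the manifold $\mathbb{R}^{>0}\times N$ with the metric in which $T(\mathbb{R}^{>0})$ is orthogonal to $TN$ at every point, the inner product on $TN$ at $(t,x)$ is $t^2$ times the given inner product of $N$ at $x$, and $\langle\partial/\partial t,\partial/\partial t\rangle=-1$. *)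

theory Defs
  imports "HOL-Analysis.Analysis"
begin

definition dirderiv :: "('a::real_normed_vector \<Rightarrow> real) \<Rightarrow> 'a \<Rightarrow> 'a \<Rightarrow> real" where
  "dirderiv f v x = deriv (\<lambda>t. f (x + t *\<^sub>R v)) 0"

fun Ck :: "nat \<Rightarrow> 'a::euclidean_space set \<Rightarrow> ('a \<Rightarrow> real) \<Rightarrow> bool" where
  "Ck 0 S f \<longleftrightarrow> continuous_on S f"
| "Ck (Suc k) S f \<longleftrightarrow> continuous_on S f \<and>
     (\<forall>x\<in>S. \<forall>b\<in>Basis. (\<lambda>t. f (x + t *\<^sub>R b)) differentiable (at 0)) \<and>
     (\<forall>b\<in>Basis. Ck k S (dirderiv f b))"

definition smooth_real_on :: "'a::euclidean_space set \<Rightarrow> ('a \<Rightarrow> real) \<Rightarrow> bool" where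
  "smooth_real_on S f \<longleftrightarrow> (\<forall>k. Ck k S f)"

definition smooth_map_on :: "'a::euclidean_space set \<Rightarrow> ('a \<Rightarrow> 'b::euclidean_space) \<Rightarrow> bool" where
  "smooth_map_on S F \<longleftrightarrow> (\<forall>e\<in>Basis. smooth_real_on S (\<lambda>x. F x \<bullet> e))"

definition hess :: "(real^'n \<Rightarrow> real) \<Rightarrow> real^'n \<Rightarrow> 'n \<Rightarrow> 'n \<Rightarrow> real" where
  "hess f x i j = dirderiv (dirderiv f (axis j 1)) (axis i 1) x"

definition hess_metric :: "real \<Rightarrow> (real^'n \<Rightarrow> real) \<Rightarrow> real^'n \<Rightarrow> real^'n \<Rightarrow> real^'n \<Rightarrow> real" where
  "hess_metric d f x v w = - (1 / (d * (d - 1))) * (\<Sum>i\<in>UNIV. \<Sum>j\<in>UNIV. hess f x i j * v$i * w$j)"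

text \<open>Tangent space of the level set {f = 1} at x: kernel of df_x.\<close>
definition level_tangent :: "(real^'n \<Rightarrow> real) \<Rightarrow> real^'n \<Rightarrow> (real^'n) set" where
  "level_tangent f x = {v. (\<Sum>i\<in>UNIV. dirderiv f (axis i 1) x * v$i) = 0}"

end

theory Submission
  imports Defs
begin

lemma Ck_cont: "Ck k S f \<Longrightarrow> continuous_on S f" by (cases k) auto

lemma Ck_Suc_imp: "Ck (Suc k) S f \<Longrightarrow> Ck k S f"
  by (induction k arbitrary: f) auto

lemma Ck_le: "m \<le> k \<Longrightarrow> Ck k S f \<Longrightarrow> Ck m S f"
proof (induction k arbitrary: m)
  case 0 thus ?case by simp
next
  case (Suc k) thus ?case using Ck_Suc_imp le_Suc_eq by metis
qed

lemma line_ev: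
  fixes x b :: "'a::real_normed_vector"
  assumes "open S" "x \<in> S"
  shows "\<forall>\<^sub>F t in nhds 0. x + t *\<^sub>R b \<in> S"
proof -
  have "open ((\<lambda>t::real. x + t *\<^sub>R b) -` S)"
    by (rule continuous_open_vimage) (auto intro!: continuous_intros assms)
  moreover have "0 \<in> (\<lambda>t::real. x + t *\<^sub>R b) -` S" using assms by simp
  ultimately show ?thesis by (rule eventually_nhds_in_open[THEN eventually_mono]) simp
qed

lemma line_cong:
  fixes f g :: "'a::real_normed_vector \<Rightarrow> real"
  assumes "open S" "x \<in> S" "\<forall>y\<in>S. f y = g y"
  shows "\<forall>\<^sub>F t in nhds 0. f (x + t *\<^sub>R b) = g (x + t *\<^sub>R b)"
  using line_ev[OF assms(1,2), of b] by eventually_elim (simp add: assms(3))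

lemma dirderiv_cong:
  fixes f g :: "'a::real_normed_vector \<Rightarrow> real"
  assumes "open S" "x \<in> S" "\<And>y. y \<in> S \<Longrightarrow> f y = g y"
  shows "dirderiv f b x = dirderiv g b x"
proof -
  have "\<forall>\<^sub>F t in nhds 0. f (x + t *\<^sub>R b) = g (x + t *\<^sub>R b)"
    using assms by (intro line_cong) auto
  then show ?thesis unfolding dirderiv_def by (rule deriv_cong_ev) simp
qed

lemma diff_cong:
  fixes f g :: "'a::real_normed_vector \<Rightarrow> real"
  assumes "open S" "x \<in> S" "\<And>y. y \<in> S \<Longrightarrow> f y = g y"
    and "(\<lambda>t. f (x + t *\<^sub>R b)) differentiable (at 0)"
  shows "(\<lambda>t. g (x + t *\<^sub>R b)) differentiable (at 0)"
proof -
  have ev: "\<forall>\<^sub>F t in nhds 0. f (x + t *\<^sub>R b) = g (x + t *\<^sub>R b)"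
    using assms by (intro line_cong) auto
  have "DERIV (\<lambda>t. f (x + t *\<^sub>R b)) 0 :> deriv (\<lambda>t. f (x + t *\<^sub>R b)) 0"
    using assms(4) DERIV_deriv_iff_real_differentiable by blast
  then have "DERIV (\<lambda>t. g (x + t *\<^sub>R b)) 0 :> deriv (\<lambda>t. f (x + t *\<^sub>R b)) 0"
    using DERIV_cong_ev[OF refl ev refl] by blast
  then show ?thesis using real_differentiable_def by blast
qed

lemma Ck_cong:
  fixes f g :: "'a::euclidean_space \<Rightarrow> real"
  assumes S: "open S"
  shows "(\<And>y. y \<in> S \<Longrightarrow> f y = g y) \<Longrightarrow> Ck k S f \<Longrightarrow> Ck k S g"
proof (induction k arbitrary: f g)
  case 0
  have "continuous_on S f" using 0(2) by simp
  then have "continuous_on S g" by (rule continuous_on_eq) (rule 0(1))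
  then show ?case by simp
next
  case (Suc k)
  have dd: "dirderiv f b y = dirderiv g b y" if "y \<in> S" for b y
    by (rule dirderiv_cong[OF S that Suc.prems(1)])
  have F: "continuous_on S f" "\<forall>x\<in>S. \<forall>b\<in>Basis. (\<lambda>t. f (x + t *\<^sub>R b)) differentiable (at 0)"
     "\<forall>b\<in>Basis. Ck k S (dirderiv f b)"
    using Suc.prems(2) by simp_all
  have c: "continuous_on S g" using F(1) by (rule continuous_on_eq) (rule Suc.prems(1))
  have d: "(\<lambda>t. g (x + t *\<^sub>R b)) differentiable (at 0)" if "x \<in> S" "b \<in> Basis" for x b
    by (rule diff_cong[OF S that(1) Suc.prems(1) F(2)[rule_format, OF that]])
  have e: "Ck k S (dirderiv g b)" if "b \<in> Basis" for b
    using F(3) that by (intro Suc.IH[of "dirderiv f b" "dirderiv g b"] dd) blast+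
  show ?case using c d e by simp
qed

lemma dirderiv_eqI:
  fixes f :: "'a::real_normed_vector \<Rightarrow> real"
  shows "((\<lambda>t. f (x + t *\<^sub>R b)) has_real_derivative D) (at 0) \<Longrightarrow> dirderiv f b x = D"
  unfolding dirderiv_def by (rule DERIV_imp_deriv)

lemma dirderiv_DERIV:
  fixes f :: "'a::real_normed_vector \<Rightarrow> real"
  shows "(\<lambda>t. f (x + t *\<^sub>R b)) differentiable (at 0) \<Longrightarrow>
   ((\<lambda>t. f (x + t *\<^sub>R b)) has_real_derivative dirderiv f b x) (at 0)"
  unfolding dirderiv_def using DERIV_deriv_iff_real_differentiable by blast

lemma Ck_const:
  fixes S :: "'a::euclidean_space set" and c :: real
  shows "Ck k S (\<lambda>x. c)"
proof (induction k arbitrary: c)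
  case 0 then show ?case by simp
next
  case (Suc k)
  have "dirderiv (\<lambda>x::'a. c) b = (\<lambda>x. 0)" for b
    by (rule ext, rule dirderiv_eqI) simp
  then show ?case using Suc by simp
qed

lemma Ck_linear:
  fixes L :: "'a::euclidean_space \<Rightarrow> real"
  assumes "bounded_linear L"
  shows "Ck k S L"
proof (cases k)
  case 0 then show ?thesis using assms by (simp add: linear_continuous_on)
next
  case (Suc m)
  interpret L: bounded_linear L by fact
  have D: "((\<lambda>t. L (x + t *\<^sub>R b)) has_real_derivative L b) (at 0)" for x b
  proof -
    have "(\<lambda>t. L (x + t *\<^sub>R b)) = (\<lambda>t. L x + t * L b)" by (simp add: L.add L.scaleR)
    then show ?thesis by (auto intro!: derivative_eq_intros)
  qed
  have "dirderiv L b = (\<lambda>x. L b)" for b by (rule ext, rule dirderiv_eqI[OF D])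
  then show ?thesis using Suc D assms Ck_const
    by (auto simp: linear_continuous_on real_differentiable_def)
qed

lemma Ck_SucI:
  fixes f :: "'a::euclidean_space \<Rightarrow> real"
  assumes S: "open S" and c: "continuous_on S f"
    and D: "\<And>x b. x \<in> S \<Longrightarrow> b \<in> Basis \<Longrightarrow> ((\<lambda>t. f (x + t *\<^sub>R b)) has_real_derivative Df b x) (at 0)"
    and C: "\<And>b. b \<in> Basis \<Longrightarrow> Ck k S (Df b)"
  shows "Ck (Suc k) S f"
proof -
  have "Ck k S (dirderiv f b)" if b: "b \<in> Basis" for b
  proof (rule Ck_cong[OF S _ C[OF b]])
    fix y assume "y \<in> S"
    show "Df b y = dirderiv f b y" by (rule dirderiv_eqI[OF D[OF \<open>y \<in> S\<close> b], symmetric])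
  qed
  moreover have "(\<lambda>t. f (x + t *\<^sub>R b)) differentiable (at 0)" if "x \<in> S" "b \<in> Basis" for x b
    using D[OF that] real_differentiable_def by blast
  ultimately show ?thesis using c by simp
qed

lemma Ck_SucD:
  assumes "Ck (Suc k) S f"
  shows "continuous_on S f" "Ck k S f"
    "\<And>x b. x \<in> S \<Longrightarrow> b \<in> Basis \<Longrightarrow> ((\<lambda>t. f (x + t *\<^sub>R b)) has_real_derivative dirderiv f b x) (at 0)"
    "\<And>b. b \<in> Basis \<Longrightarrow> Ck k S (dirderiv f b)"
  using assms Ck_Suc_imp[OF assms] by (auto intro: dirderiv_DERIV)

lemma Ck_add:
  fixes f g :: "'a::euclidean_space \<Rightarrow> real"
  assumes S: "open S"
  shows "Ck k S f \<Longrightarrow> Ck k S g \<Longrightarrow> Ck k S (\<lambda>x. f x + g x)"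
proof (induction k arbitrary: f g)
  case 0 then show ?case by (auto intro: continuous_on_add)
next
  case (Suc k)
  note F = Ck_SucD[OF Suc.prems(1)] and G = Ck_SucD[OF Suc.prems(2)]
  show ?case
  proof (rule Ck_SucI[OF S, where Df="\<lambda>b x. dirderiv f b x + dirderiv g b x"])
    show "continuous_on S (\<lambda>x. f x + g x)" using F(1) G(1) by (rule continuous_on_add)
    fix x b :: 'a assume xb: "x \<in> S" "b \<in> Basis"
    show "((\<lambda>t. f (x + t *\<^sub>R b) + g (x + t *\<^sub>R b)) has_real_derivative
          dirderiv f b x + dirderiv g b x) (at 0)"
      by (rule DERIV_add[OF F(3)[OF xb] G(3)[OF xb]])
  next
    fix b :: 'a assume b: "b \<in> Basis"
    show "Ck k S (\<lambda>x. dirderiv f b x + dirderiv g b x)" by (rule Suc.IH[OF F(4)[OF b] G(4)[OF b]])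
  qed
qed

lemma Ck_mult:
  fixes f g :: "'a::euclidean_space \<Rightarrow> real"
  assumes S: "open S"
  shows "Ck k S f \<Longrightarrow> Ck k S g \<Longrightarrow> Ck k S (\<lambda>x. f x * g x)"
proof (induction k arbitrary: f g)
  case 0 then show ?case by (auto intro: continuous_on_mult)
next
  case (Suc k)
  note F = Ck_SucD[OF Suc.prems(1)] and G = Ck_SucD[OF Suc.prems(2)]
  show ?case
  proof (rule Ck_SucI[OF S, where Df="\<lambda>b x. dirderiv f b x * g x + f x * dirderiv g b x"])
    show "continuous_on S (\<lambda>x. f x * g x)" using F(1) G(1) by (rule continuous_on_mult)
    fix x b :: 'a assume xb: "x \<in> S" "b \<in> Basis"
    show "((\<lambda>t. f (x + t *\<^sub>R b) * g (x + t *\<^sub>R b)) has_real_derivative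
          dirderiv f b x * g x + f x * dirderiv g b x) (at 0)"
      using DERIV_mult[OF F(3)[OF xb] G(3)[OF xb]] by (simp add: mult.commute)
  next
    fix b :: 'a assume b: "b \<in> Basis"
    show "Ck k S (\<lambda>x. dirderiv f b x * g x + f x * dirderiv g b x)"
      by (rule Ck_add[OF S Suc.IH[OF F(4)[OF b] G(2)] Suc.IH[OF F(2) G(4)[OF b]]])
  qed
qed

lemma Ck_powr:
  fixes f :: "'a::euclidean_space \<Rightarrow> real"
  assumes S: "open S"
  shows "Ck k S f \<Longrightarrow> \<forall>x\<in>S. f x > 0 \<Longrightarrow> Ck k S (\<lambda>x. f x powr a)"
proof (induction k arbitrary: a)
  case 0
  have "\<forall>x\<in>S. f x \<noteq> 0" using 0 by fastforce
  with 0 show ?case by (auto intro!: continuous_intros)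
next
  case (Suc k)
  note F = Ck_SucD[OF Suc.prems(1)]
  have pos: "\<And>x. x \<in> S \<Longrightarrow> f x > 0" using Suc.prems by auto
  show ?case
  proof (rule Ck_SucI[OF S, where Df="\<lambda>b x. a * f x powr (a - 1) * dirderiv f b x"])
    have "\<forall>x\<in>S. f x \<noteq> 0" using pos by fastforce
    then show "continuous_on S (\<lambda>x. f x powr a)" using F(1) by (intro continuous_intros) auto
    fix x b :: 'a assume xb: "x \<in> S" "b \<in> Basis"
    show "((\<lambda>t. f (x + t *\<^sub>R b) powr a) has_real_derivative
          a * f x powr (a - 1) * dirderiv f b x) (at 0)"
      using DERIV_fun_powr[OF F(3)[OF xb], of a] pos[OF xb(1)] by simp
  next
    fix b :: 'a assume b: "b \<in> Basis"
    show "Ck k S (\<lambda>x. a * f x powr (a - 1) * dirderiv f b x)"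
      using Suc.IH[OF F(2)] Suc.prems(2)
      by (intro Ck_mult[OF S _ F(4)[OF b]] Ck_mult[OF S Ck_const]) auto
  qed
qed

lemma line_deriv_at:
  assumes "(\<lambda>t. F ((z + s *\<^sub>R b) + t *\<^sub>R b)) differentiable (at 0)"
  shows "((\<lambda>s. F (z + s *\<^sub>R b)) has_real_derivative dirderiv F b (z + s *\<^sub>R b)) (at s)"
proof -
  let ?G = "\<lambda>t. F ((z + s *\<^sub>R b) + t *\<^sub>R b)"
  have "(?G has_real_derivative dirderiv F b (z + s *\<^sub>R b)) (at (s + - s))"
    using dirderiv_DERIV[OF assms] by simp
  then have "((\<lambda>u. ?G (u + - s)) has_real_derivative dirderiv F b (z + s *\<^sub>R b)) (at s)"
    by (subst (asm) DERIV_shift)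
  moreover have "(\<lambda>u. ?G (u + - s)) = (\<lambda>u. F (z + u *\<^sub>R b))"
    by (rule ext) (simp add: algebra_simps)
  ultimately show ?thesis by simp
qed

lemma mvt_sym:
  fixes g g' :: "real \<Rightarrow> real"
  assumes "\<And>s. \<bar>s\<bar> \<le> \<bar>h\<bar> \<Longrightarrow> DERIV g s :> g' s"
  shows "\<exists>\<xi>. \<bar>\<xi>\<bar> \<le> \<bar>h\<bar> \<and> g h - g 0 = h * g' \<xi>"
proof (cases "h = 0")
  case True then show ?thesis by auto
next
  case False
  show ?thesis
  proof (cases "h > 0")
    case True
    from MVT2[OF True, of g g'] assms obtain z where "0 < z" "z < h" "g h - g 0 = (h - 0) * g' z"
      by force
    then show ?thesis by (intro exI[of _ z]) auto
  next
    case False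
    with \<open>h \<noteq> 0\<close> have "h < 0" by simp
    from MVT2[OF this, of g g'] assms obtain z where "h < z" "z < 0" "g 0 - g h = (0 - h) * g' z"
      by force
    then show ?thesis by (intro exI[of _ z]) (auto simp: algebra_simps)
  qed
qed

lemma norm_neg_sum: "norm (- a - b) = norm ((a::'a::real_normed_vector) + b)"
proof -
  have "- a - b = - (a + b)" by simp
  then show ?thesis by (simp only: norm_minus_cancel)
qed

definition pvec :: "'n set \<Rightarrow> real^'n \<Rightarrow> real^'n" where
  "pvec S h = (\<chi> j. if j \<in> S then h$j else 0)"

lemma partial_sum_bound:
  fixes F :: "real^'n \<Rightarrow> real"
  assumes diffU: "\<And>y i. y \<in> U \<Longrightarrow> (\<lambda>t. F (y + t *\<^sub>R axis i 1)) differentiable (at 0)"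
    and ball: "ball x \<delta> \<subseteq> U"
    and close: "\<And>i y. y \<in> ball x \<delta> \<Longrightarrow> \<bar>dirderiv F (axis i 1) y - dirderiv F (axis i 1) x\<bar> \<le> \<epsilon>"
    and h: "norm h < \<delta>" and fin: "finite S"
  shows "\<bar>F (x + pvec S h) - F x - (\<Sum>i\<in>S. dirderiv F (axis i 1) x * h$i)\<bar> \<le> real (card S) * \<epsilon> * norm h"
  using fin
proof (induction S rule: finite_induct)
  case empty
  have "pvec {} h = 0" by (simp add: pvec_def vec_eq_iff)
  then show ?case by simp
next
  case (insert i S)
  let ?e = "axis i (1::real)"
  define z where "z = x + pvec S h"
  define G where "G = (\<lambda>s. F (z + s *\<^sub>R ?e))"
  have pins: "pvec (insert i S) h = pvec S h + h$i *\<^sub>R ?e"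
    using insert.hyps by (auto simp: pvec_def vec_eq_iff axis_def)
  have inball: "z + s *\<^sub>R ?e \<in> ball x \<delta>" if "\<bar>s\<bar> \<le> \<bar>h$i\<bar>" for s
  proof -
    have "norm (pvec S h + s *\<^sub>R ?e) \<le> norm h"
      using insert.hyps that by (intro norm_le_componentwise_cart) (auto simp: pvec_def axis_def)
    moreover have "norm (- pvec S h - s *\<^sub>R ?e) = norm (pvec S h + s *\<^sub>R ?e)"
      by (rule norm_neg_sum)
    ultimately show ?thesis using h by (simp add: z_def dist_norm)
  qed
  have "\<exists>\<xi>. \<bar>\<xi>\<bar> \<le> \<bar>h$i\<bar> \<and> G (h$i) - G 0 = h$i * dirderiv F ?e (z + \<xi> *\<^sub>R ?e)"
    unfolding G_def
  proof (rule mvt_sym)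
    fix s :: real assume "\<bar>s\<bar> \<le> \<bar>h$i\<bar>"
    then have "z + s *\<^sub>R ?e \<in> U" using inball ball by blast
    then show "DERIV (\<lambda>s. F (z + s *\<^sub>R ?e)) s :> dirderiv F ?e (z + s *\<^sub>R ?e)"
      by (intro line_deriv_at diffU)
  qed
  then obtain \<xi> where xi: "\<bar>\<xi>\<bar> \<le> \<bar>h$i\<bar>" "G (h$i) - G 0 = h$i * dirderiv F ?e (z + \<xi> *\<^sub>R ?e)"
    by blast
  have "\<bar>G (h$i) - G 0 - dirderiv F ?e x * h$i\<bar> = \<bar>h$i\<bar> * \<bar>dirderiv F ?e (z + \<xi> *\<^sub>R ?e) - dirderiv F ?e x\<bar>"
    using xi by (simp add: algebra_simps abs_mult[symmetric])
  also have "\<dots> \<le> norm h * \<epsilon>"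
    using close[OF inball[OF xi(1)], of i] component_le_norm_cart[of h i]
    by (intro mult_mono) auto
  finally have step: "\<bar>G (h$i) - G 0 - dirderiv F ?e x * h$i\<bar> \<le> norm h * \<epsilon>" .
  have G0: "G 0 = F (x + pvec S h)" "G (h$i) = F (x + pvec (insert i S) h)"
    by (simp_all add: G_def z_def pins add.assoc)
  have "\<bar>F (x + pvec (insert i S) h) - F x - (\<Sum>j\<in>insert i S. dirderiv F (axis j 1) x * h$j)\<bar>
      = \<bar>(G (h$i) - G 0 - dirderiv F ?e x * h$i) + (F (x + pvec S h) - F x - (\<Sum>j\<in>S. dirderiv F (axis j 1) x * h$j))\<bar>"
    using insert.hyps G0 by simp
  also have "\<dots> \<le> norm h * \<epsilon> + real (card S) * \<epsilon> * norm h"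
    using step insert.IH by linarith
  also have "\<dots> = real (card (insert i S)) * \<epsilon> * norm h"
    using insert.hyps by (simp add: algebra_simps)
  finally show ?case .
qed

lemma frechet:
  fixes F :: "real^'n \<Rightarrow> real"
  assumes U: "open U" and C: "Ck (Suc k) U F" and x: "x \<in> U"
  shows "(F has_derivative (\<lambda>h. \<Sum>i\<in>UNIV. dirderiv F (axis i 1) x * h$i)) (at x)"
  unfolding has_derivative_at_alt
proof (intro conjI allI impI)
  show "bounded_linear (\<lambda>h. \<Sum>i\<in>UNIV. dirderiv F (axis i 1) x * h$i)"
    by (intro bounded_linear_sum bounded_linear_mult_right[THEN bounded_linear_compose]) auto
next
  fix e :: real assume e: "e > 0"
  define \<epsilon> where "\<epsilon> = e / real CARD('n)"
  have eps: "\<epsilon> > 0" using e by (simp add: \<epsilon>_def)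
  have diffU: "\<And>y i. y \<in> U \<Longrightarrow> (\<lambda>t. F (y + t *\<^sub>R axis i 1)) differentiable (at 0)"
    using C by (simp add: Basis_real_def)
  have cont: "continuous_on U (dirderiv F (axis i 1))" for i
    using C by (auto intro: Ck_cont simp: Basis_real_def)
  obtain d1 where d1: "d1 > 0" "ball x d1 \<subseteq> U" using U x open_contains_ball by blast
  have "\<forall>\<^sub>F y in at x. \<forall>i. dist (dirderiv F (axis i 1) y) (dirderiv F (axis i 1) x) < \<epsilon>"
  proof (rule eventually_all_finite)
    fix i
    have "isCont (dirderiv F (axis i 1)) x"
      using cont[of i] U x continuous_on_eq_continuous_at by blast
    then show "\<forall>\<^sub>F y in at x. dist (dirderiv F (axis i 1) y) (dirderiv F (axis i 1) x) < \<epsilon>"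
      using eps isCont_def tendstoD by blast
  qed
  then obtain d2 where d2: "d2 > 0"
    "\<And>y. y \<noteq> x \<Longrightarrow> dist y x < d2 \<Longrightarrow> \<forall>i. dist (dirderiv F (axis i 1) y) (dirderiv F (axis i 1) x) < \<epsilon>"
    unfolding eventually_at by auto
  define \<delta> where "\<delta> = min d1 d2"
  have close: "\<And>i y. y \<in> ball x \<delta> \<Longrightarrow> \<bar>dirderiv F (axis i 1) y - dirderiv F (axis i 1) x\<bar> \<le> \<epsilon>"
  proof -
    fix i y assume "y \<in> ball x \<delta>"
    then have yd: "dist y x < d2" by (simp add: \<delta>_def dist_commute)
    show "\<bar>dirderiv F (axis i 1) y - dirderiv F (axis i 1) x\<bar> \<le> \<epsilon>"
    proof (cases "y = x")
      case True then show ?thesis using eps by simp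
    next
      case False
      then have "dist (dirderiv F (axis i 1) y) (dirderiv F (axis i 1) x) < \<epsilon>" using d2(2)[OF False yd] by blast
      then show ?thesis by (simp only: dist_real_def)
    qed
  qed
  have ballU: "ball x \<delta> \<subseteq> U" using d1 by (auto simp: \<delta>_def)
  show "\<exists>d>0. \<forall>y. norm (y - x) < d \<longrightarrow>
           norm (F y - F x - (\<Sum>i\<in>UNIV. dirderiv F (axis i 1) x * (y - x)$i)) \<le> e * norm (y - x)"
  proof (intro exI[of _ \<delta>] conjI allI impI)
    show "\<delta> > 0" using d1 d2 by (simp add: \<delta>_def)
    fix y assume y: "norm (y - x) < \<delta>"
    have pv: "pvec UNIV (y - x) = y - x" by (simp add: pvec_def vec_eq_iff)
    have "\<bar>F (x + pvec UNIV (y - x)) - F x - (\<Sum>i\<in>UNIV. dirderiv F (axis i 1) x * (y - x)$i)\<bar>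
          \<le> real (card (UNIV::'n set)) * \<epsilon> * norm (y - x)"
      by (rule partial_sum_bound[OF diffU ballU close y]) auto
    also have "real (card (UNIV::'n set)) * \<epsilon> = e" by (simp add: \<epsilon>_def)
    finally show "norm (F y - F x - (\<Sum>i\<in>UNIV. dirderiv F (axis i 1) x * (y - x)$i)) \<le> e * norm (y - x)"
      using pv by (simp add: real_norm_def)
  qed
qed

lemma euler:
  fixes F :: "real^'n \<Rightarrow> real"
  assumes U: "open U" and C: "Ck (Suc k) U F"
    and hom: "\<And>x c. x \<in> U \<Longrightarrow> c > 0 \<Longrightarrow> F (c *\<^sub>R x) = c powr e * F x" and x: "x \<in> U"
  shows "(\<Sum>i\<in>UNIV. dirderiv F (axis i 1) x * x$i) = e * F x"
proof -
  let ?L = "\<lambda>h. \<Sum>i\<in>UNIV. dirderiv F (axis i 1) x * h$i"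
  have dF: "(F has_derivative ?L) (at x)" by (rule frechet[OF U C x])
  have dl: "((\<lambda>c::real. c *\<^sub>R x) has_derivative (\<lambda>c. c *\<^sub>R x)) (at 1)"
    by (auto intro!: derivative_eq_intros)
  have "((F \<circ> (\<lambda>c. c *\<^sub>R x)) has_derivative (?L \<circ> (\<lambda>c. c *\<^sub>R x))) (at 1)"
    by (rule diff_chain_at[OF dl]) (simp add: dF)
  moreover have "(?L \<circ> (\<lambda>c. c *\<^sub>R x)) = (\<lambda>c. ?L x * c)"
    by (rule ext) (simp add: sum_distrib_left algebra_simps)
  ultimately have D1: "((\<lambda>c. F (c *\<^sub>R x)) has_real_derivative ?L x) (at 1)"
    by (simp add: has_field_derivative_def o_def)
  have "((\<lambda>c. c powr e) has_real_derivative e * 1 powr (e - 1)) (at 1)"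
    by (rule has_real_derivative_powr) simp
  then have D2: "((\<lambda>c. c powr e * F x) has_real_derivative e * F x) (at 1)"
    using DERIV_cmult_right by fastforce
  have D3: "((\<lambda>c. F (c *\<^sub>R x)) has_real_derivative e * F x) (at 1)"
    by (rule has_field_derivative_transform_within_open[OF D2, of "{0<..}"]) (auto simp: hom x)
  show ?thesis using DERIV_unique[OF D1 D3] by simp
qed

lemma dirderiv_homog:
  fixes F :: "real^'n \<Rightarrow> real"
  assumes U: "open U" and cone: "\<And>x c. x \<in> U \<Longrightarrow> c > 0 \<Longrightarrow> c *\<^sub>R x \<in> U"
    and hom: "\<And>x c. x \<in> U \<Longrightarrow> c > 0 \<Longrightarrow> F (c *\<^sub>R x) = c powr e * F x"
    and x: "x \<in> U" and c: "c > 0"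
    and dif: "(\<lambda>t. F (x + t *\<^sub>R b)) differentiable (at 0)"
  shows "dirderiv F b (c *\<^sub>R x) = c powr (e - 1) * dirderiv F b x"
proof -
  have G: "DERIV (\<lambda>t. F (x + t *\<^sub>R b)) (0 / c) :> dirderiv F b x"
    using dirderiv_DERIV[OF dif] by simp
  have "DERIV (\<lambda>t. F (x + (t / c) *\<^sub>R b)) 0 :> dirderiv F b x * (1 / c)"
  proof -
    have "DERIV (\<lambda>t. t / c) 0 :> 1 / c" by (rule DERIV_cdivide[OF DERIV_ident])
    from DERIV_chain2[OF G this] show ?thesis by simp
  qed
  then have K: "DERIV (\<lambda>t. c powr e * F (x + (t / c) *\<^sub>R b)) 0 :> c powr e * (dirderiv F b x * (1 / c))"
    by (rule DERIV_cmult)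
  define T where "T = (\<lambda>t. x + (t / c) *\<^sub>R b) -` U"
  have oT: "open T" unfolding T_def
    using c by (intro continuous_open_vimage[OF U]) (auto intro!: continuous_intros)
  have T0: "0 \<in> T" using x by (simp add: T_def)
  have eq: "c powr e * F (x + (t / c) *\<^sub>R b) = F (c *\<^sub>R x + t *\<^sub>R b)" if "t \<in> T" for t
  proof -
    have "x + (t / c) *\<^sub>R b \<in> U" using that by (simp add: T_def)
    then have "F (c *\<^sub>R (x + (t / c) *\<^sub>R b)) = c powr e * F (x + (t / c) *\<^sub>R b)"
      using hom c by blast
    moreover have "c *\<^sub>R (x + (t / c) *\<^sub>R b) = c *\<^sub>R x + t *\<^sub>R b"
      using c by (simp add: scaleR_add_right)
    ultimately show ?thesis by simp
  qed
  have "DERIV (\<lambda>t. F (c *\<^sub>R x + t *\<^sub>R b)) 0 :> c powr e * (dirderiv F b x * (1 / c))"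
    by (rule has_field_derivative_transform_within_open[OF K oT T0 eq])
  then have "dirderiv F b (c *\<^sub>R x) = c powr e * (dirderiv F b x * (1 / c))"
    by (rule dirderiv_eqI)
  also have "\<dots> = c powr (e - 1) * dirderiv F b x"
    using c by (simp add: powr_diff)
  finally show ?thesis .
qed

lemma Q_lin2:
  fixes H :: "'n::finite \<Rightarrow> 'n \<Rightarrow> real"
  shows "(\<Sum>i\<in>UNIV. \<Sum>j\<in>UNIV. H i j * v$i * (u - c *\<^sub>R x)$j) =
    (\<Sum>i\<in>UNIV. \<Sum>j\<in>UNIV. H i j * v$i * u$j) - c * (\<Sum>i\<in>UNIV. \<Sum>j\<in>UNIV. H i j * v$i * x$j)"
  by (simp add: algebra_simps sum_subtractf sum_distrib_left)

lemma Q_x2: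
  fixes H :: "'n::finite \<Rightarrow> 'n \<Rightarrow> real"
  assumes "\<And>i. (\<Sum>j\<in>UNIV. H i j * x$j) = a * D i"
  shows "(\<Sum>i\<in>UNIV. \<Sum>j\<in>UNIV. H i j * v$i * x$j) = a * (\<Sum>i\<in>UNIV. D i * v$i)"
proof -
  have "(\<Sum>i\<in>UNIV. \<Sum>j\<in>UNIV. H i j * v$i * x$j) = (\<Sum>i\<in>UNIV. v$i * (\<Sum>j\<in>UNIV. H i j * x$j))"
    by (simp add: sum_distrib_left algebra_simps)
  also have "\<dots> = (\<Sum>i\<in>UNIV. v$i * (a * D i))" by (simp only: assms)
  also have "\<dots> = a * (\<Sum>i\<in>UNIV. D i * v$i)"
    by (simp add: sum_distrib_left algebra_simps)
  finally show ?thesis .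
qed

lemma Q_x1:
  fixes H :: "'n::finite \<Rightarrow> 'n \<Rightarrow> real"
  assumes "\<And>j. (\<Sum>i\<in>UNIV. H i j * x$i) = a * D j"
  shows "(\<Sum>i\<in>UNIV. \<Sum>j\<in>UNIV. H i j * x$i * w$j) = a * (\<Sum>j\<in>UNIV. D j * w$j)"
proof -
  have "(\<Sum>i\<in>UNIV. \<Sum>j\<in>UNIV. H i j * x$i * w$j) = (\<Sum>j\<in>UNIV. \<Sum>i\<in>UNIV. H i j * x$i * w$j)"
    by (rule sum.swap)
  also have "\<dots> = (\<Sum>j\<in>UNIV. w$j * (\<Sum>i\<in>UNIV. H i j * x$i))"
    by (simp add: sum_distrib_left algebra_simps)
  also have "\<dots> = (\<Sum>j\<in>UNIV. w$j * (a * D j))" by (simp only: assms)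
  also have "\<dots> = a * (\<Sum>j\<in>UNIV. D j * w$j)"
    by (simp add: sum_distrib_left algebra_simps)
  finally show ?thesis .
qed

lemma Q_axis:
  fixes H :: "'n::finite \<Rightarrow> 'n \<Rightarrow> real"
  shows "(\<Sum>i\<in>UNIV. \<Sum>j\<in>UNIV. H i j * v$i * axis k 1 $ j) = (\<Sum>i\<in>UNIV. H i k * v$i)"
  by (simp add: axis_def if_distrib cong: if_cong)

lemma Q_expand:
  fixes H :: "'n::finite \<Rightarrow> 'n \<Rightarrow> real"
  shows "(\<Sum>i\<in>UNIV. \<Sum>j\<in>UNIV. H i j * (\<alpha> *\<^sub>R x + \<beta> *\<^sub>R v)$i * (\<gamma> *\<^sub>R x + \<delta> *\<^sub>R w)$j) =
    \<alpha> * \<gamma> * (\<Sum>i\<in>UNIV. \<Sum>j\<in>UNIV. H i j * x$i * x$j) + \<alpha> * \<delta> * (\<Sum>i\<in>UNIV. \<Sum>j\<in>UNIV. H i j * x$i * w$j)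
    + \<beta> * \<gamma> * (\<Sum>i\<in>UNIV. \<Sum>j\<in>UNIV. H i j * v$i * x$j) + \<beta> * \<delta> * (\<Sum>i\<in>UNIV. \<Sum>j\<in>UNIV. H i j * v$i * w$j)"
  by (simp add: algebra_simps sum.distrib sum_distrib_left)

lemma pw1:
  fixes t d :: real assumes t: "t > 0" and d: "d > 1"
  shows "(t powr (2/d)) powr (d-2) * (t powr (2/d - 1))\<^sup>2 = 1"
proof -
  have "(t powr (2/d)) powr (d-2) * (t powr (2/d - 1))\<^sup>2 = t powr (2/d*(d-2)) * (t powr (2/d - 1) * t powr (2/d - 1))"
    by (simp add: power2_eq_square powr_powr)
  also have "\<dots> = t powr (2/d*(d-2) + ((2/d - 1) + (2/d - 1)))"
    by (simp only: powr_add)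
  also have "2/d*(d-2) + ((2/d - 1) + (2/d - 1)) = 0" using d by (simp add: field_simps)
  finally show ?thesis using t by simp
qed

lemma pw2:
  fixes t d :: real assumes t: "t > 0" and d: "d > 1"
  shows "(t powr (2/d)) powr (d-2) * (t powr (2/d))\<^sup>2 = t\<^sup>2"
proof -
  have "(t powr (2/d)) powr (d-2) * (t powr (2/d))\<^sup>2 = t powr (2/d*(d-2)) * (t powr (2/d) * t powr (2/d))"
    by (simp add: power2_eq_square powr_powr)
  also have "\<dots> = t powr (2/d*(d-2) + (2/d + 2/d))"
    by (simp only: powr_add)
  also have "2/d*(d-2) + (2/d + 2/d) = 2" using d by (simp add: field_simps)
  finally show ?thesis using t by (simp add: powr_numeral)
qed

lemma sum_axis: "(\<Sum>j\<in>UNIV. axis i (1::real) $ j * g j) = g i"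
proof -
  have "(\<Sum>j\<in>UNIV. axis i (1::real) $ j * g j) = (\<Sum>j\<in>UNIV. if j = i then g j else 0)"
    by (rule sum.cong) (auto simp: axis_def)
  then show ?thesis by simp
qed

lemma sum_axis': "(\<Sum>j\<in>UNIV. g j * axis i (1::real) $ j) = g i"
  using sum_axis[of i g] by (simp add: mult.commute)

lemma final_alg:
  fixes P c1 l t K d a b Q :: real
  assumes "P * c1^2 = 4/d^2" "P * (l*l) = t^2" "K * ((d-1)*d) = -1"
  shows "P * K * (a*c1*(b*c1)*((d-1)*d) + l*l*Q) = -(4/d^2)*a*b + t^2*(K*Q)"
proof -
  have "P * K * (a*c1*(b*c1)*((d-1)*d) + l*l*Q) = (K*((d-1)*d))*a*b*(P*c1^2) + (P*(l*l))*(K*Q)"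
    by (simp add: algebra_simps power2_eq_square)
  then show ?thesis using assms by simp
qed

theorem lemma2p1:
  fixes U :: "(real^'n) set" and f :: "real^'n \<Rightarrow> real" and d :: real
  assumes n2: "CARD('n) \<ge> 2"
    and openU: "open U"
    and cone: "\<And>x c. x \<in> U \<Longrightarrow> c > 0 \<Longrightarrow> c *\<^sub>R x \<in> U"
    and smooth: "smooth_real_on U f"
    and d1: "d > 1"
    and homog: "\<And>x c. x \<in> U \<Longrightarrow> c > 0 \<Longrightarrow> f (c *\<^sub>R x) = c powr d * f x"
    and pos: "\<And>x. x \<in> U \<Longrightarrow> f x > 0"
    and nondeg: "\<And>x. x \<in> U \<Longrightarrow> det (\<chi> i j. hess f x i j) \<noteq> 0"
  shows
    "let M = {x \<in> U. f x = 1};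
         g = hess_metric d f;
         \<phi> = (\<lambda>p::real \<times> (real^'n). fst p powr (2 / d) *\<^sub>R snd p)
     in
       \<comment> \<open>the restricted metric on M is nondegenerate\<close>
       (\<forall>x\<in>M. \<forall>v\<in>level_tangent f x.
          (\<forall>w\<in>level_tangent f x. g x v w = 0) \<longrightarrow> v = 0)
       \<comment> \<open>phi is a diffeomorphism from R>0 x M onto U\<close>
     \<and> bij_betw \<phi> ({0<..} \<times> M) U
     \<and> smooth_map_on ({0<..} \<times> UNIV) \<phi>
     \<and> (\<exists>\<psi>. smooth_map_on U \<psi> \<and>
           (\<forall>y\<in>U. \<psi> y \<in> {0<..} \<times> M \<and> \<phi> (\<psi> y) = y))
       \<comment> \<open>phi pulls the metric g back to the warped product metric
           (4/d^2)((-1) R>0 x_t (d^2/4) M), i.e. -(4/d^2) a b + t^2 g_M(v,w)\<close>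
     \<and> (\<forall>t>0. \<forall>x\<in>M. \<exists>\<phi>'. (\<phi> has_derivative \<phi>') (at (t, x)) \<and>
           (\<forall>a b. \<forall>v\<in>level_tangent f x. \<forall>w\<in>level_tangent f x.
              g (\<phi> (t, x)) (\<phi>' (a, v)) (\<phi>' (b, w))
                = - (4 / d\<^sup>2) * a * b + t\<^sup>2 * g x v w))"
proof -
  have Ck_all: "\<And>k. Ck k U f" using smooth by (simp add: smooth_real_on_def)
  have ax: "\<And>i. axis i (1::real) \<in> Basis" by simp
  have d0: "d \<noteq> 0" using d1 by simp
  have fline: "\<And>y i. y \<in> U \<Longrightarrow> (\<lambda>t. f (y + t *\<^sub>R axis i 1)) differentiable (at 0)"
    using Ck_all[of "Suc 0"] ax unfolding Ck.simps by blast
  have CD: "\<And>j. Ck (Suc (Suc 0)) U (dirderiv f (axis j 1))"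
    using Ck_SucD(4)[OF Ck_all[of "Suc (Suc (Suc 0))"] ax] .
  have Dline: "\<And>y i j. y \<in> U \<Longrightarrow> (\<lambda>t. dirderiv f (axis j 1) (y + t *\<^sub>R axis i 1)) differentiable (at 0)"
    using CD ax unfolding Ck.simps by blast
  have Dhom: "\<And>y c j. y \<in> U \<Longrightarrow> c > 0 \<Longrightarrow> dirderiv f (axis j 1) (c *\<^sub>R y) = c powr (d - 1) * dirderiv f (axis j 1) y"
    by (rule dirderiv_homog[OF openU cone homog]) (auto intro: fline)
  have hhom: "\<And>y c i j. y \<in> U \<Longrightarrow> c > 0 \<Longrightarrow> hess f (c *\<^sub>R y) i j = c powr (d - 2) * hess f y i j"
  proof -
    fix y c i j assume y: "y \<in> U" and c: "(c::real) > 0"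
    have "dirderiv (dirderiv f (axis j 1)) (axis i 1) (c *\<^sub>R y) = c powr (d - 1 - 1) * dirderiv (dirderiv f (axis j 1)) (axis i 1) y"
      by (rule dirderiv_homog[OF openU cone Dhom[of _ _ j] y c Dline[OF y]])
    then show "hess f (c *\<^sub>R y) i j = c powr (d - 2) * hess f y i j" by (simp add: hess_def)
  qed
  have eul: "\<And>y. y \<in> U \<Longrightarrow> (\<Sum>i\<in>UNIV. dirderiv f (axis i 1) y * y$i) = d * f y"
    by (rule euler[OF openU Ck_all homog])
  have hA: "\<And>y j. y \<in> U \<Longrightarrow> (\<Sum>i\<in>UNIV. hess f y i j * y$i) = (d - 1) * dirderiv f (axis j 1) y"
    unfolding hess_def by (rule euler[OF openU CD Dhom])
  have hB: "\<And>y i. y \<in> U \<Longrightarrow> (\<Sum>j\<in>UNIV. hess f y i j * y$j) = (d - 1) * dirderiv f (axis i 1) y"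
  proof -
    fix y and i :: 'n assume y: "y \<in> U"
    let ?e = "axis i (1::real)"
    define T where "T = (\<lambda>t::real. y + t *\<^sub>R ?e) -` U"
    have oT: "open T" unfolding T_def
      by (intro continuous_open_vimage[OF openU]) (auto intro!: continuous_intros)
    have T0: "0 \<in> T" using y by (simp add: T_def)
    have dd1: "((\<lambda>t. (y + t *\<^sub>R ?e)$j) has_real_derivative ?e$j) (at 0)" for j
    proof -
      have "(\<lambda>t. (y + t *\<^sub>R ?e)$j) = (\<lambda>t. y$j + t * ?e$j)" by (rule ext) simp
      then show ?thesis by (auto intro!: derivative_eq_intros)
    qed
    have dd2: "((\<lambda>t. dirderiv f (axis j 1) (y + t *\<^sub>R ?e)) has_real_derivative hess f y i j) (at 0)" for j
      unfolding hess_def by (rule dirderiv_DERIV[OF Dline[OF y]])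
    have DK: "((\<lambda>t. \<Sum>j\<in>UNIV. (y + t *\<^sub>R ?e)$j * dirderiv f (axis j 1) (y + t *\<^sub>R ?e)) has_real_derivative
        (\<Sum>j\<in>UNIV. ?e$j * dirderiv f (axis j 1) y + hess f y i j * y$j)) (at 0)"
    proof (rule DERIV_sum)
      fix j
      show "((\<lambda>t. (y + t *\<^sub>R ?e)$j * dirderiv f (axis j 1) (y + t *\<^sub>R ?e)) has_real_derivative
        ?e$j * dirderiv f (axis j 1) y + hess f y i j * y$j) (at 0)"
        using DERIV_mult[OF dd1 dd2] by simp
    qed
    have DR: "((\<lambda>t. d * f (y + t *\<^sub>R ?e)) has_real_derivative d * dirderiv f ?e y) (at 0)"
      by (rule DERIV_cmult[OF dirderiv_DERIV[OF fline[OF y]]])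
    have eqT: "d * f (y + t *\<^sub>R ?e) = (\<Sum>j\<in>UNIV. (y + t *\<^sub>R ?e)$j * dirderiv f (axis j 1) (y + t *\<^sub>R ?e))"
      if "t \<in> T" for t
    proof -
      have "y + t *\<^sub>R ?e \<in> U" using that by (simp add: T_def)
      from eul[OF this] show ?thesis by (simp add: mult.commute)
    qed
    have DK2: "((\<lambda>t. \<Sum>j\<in>UNIV. (y + t *\<^sub>R ?e)$j * dirderiv f (axis j 1) (y + t *\<^sub>R ?e)) has_real_derivative
        d * dirderiv f ?e y) (at 0)"
      by (rule has_field_derivative_transform_within_open[OF DR oT T0 eqT])
    have "(\<Sum>j\<in>UNIV. ?e$j * dirderiv f (axis j 1) y + hess f y i j * y$j) = d * dirderiv f ?e y"
      by (rule DERIV_unique[OF DK DK2])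
    moreover have "(\<Sum>j\<in>UNIV. ?e$j * dirderiv f (axis j 1) y) = dirderiv f ?e y"
      by (rule sum_axis)
    ultimately show "(\<Sum>j\<in>UNIV. hess f y i j * y$j) = (d - 1) * dirderiv f (axis i 1) y"
      by (simp add: sum.distrib algebra_simps)
  qed

  define M where "M = {x \<in> U. f x = 1}"
  define \<phi> where "\<phi> = (\<lambda>p::real \<times> (real^'n). fst p powr (2 / d) *\<^sub>R snd p)"
  define \<psi> where "\<psi> = (\<lambda>y::real^'n. (f y powr (1/2), f y powr (-1/d) *\<^sub>R y))"

  have P1: "\<forall>x\<in>M. \<forall>v\<in>level_tangent f x. (\<forall>w\<in>level_tangent f x. hess_metric d f x v w = 0) \<longrightarrow> v = 0"
  proof (intro ballI impI)
    fix x v assume xM: "x \<in> M" and v: "v \<in> level_tangent f x"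
      and W: "\<forall>w\<in>level_tangent f x. hess_metric d f x v w = 0"
    from xM have x: "x \<in> U" "f x = 1" by (auto simp: M_def)
    have kap: "- (1 / (d * (d - 1))) \<noteq> 0" using d1 by simp
    have W': "(\<Sum>i\<in>UNIV. \<Sum>j\<in>UNIV. hess f x i j * v$i * w$j) = 0" if "w \<in> level_tangent f x" for w
      using W that kap by (simp add: hess_metric_def)
    have vt: "(\<Sum>i\<in>UNIV. dirderiv f (axis i 1) x * v$i) = 0" using v by (simp add: level_tangent_def)
    have Qvx: "(\<Sum>i\<in>UNIV. \<Sum>j\<in>UNIV. hess f x i j * v$i * x$j) = 0"
      using Q_x2[of "\<lambda>i j. hess f x i j" x "d - 1" "\<lambda>i. dirderiv f (axis i 1) x" v] hB[OF x(1)] vt by simp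
    have col: "(\<Sum>i\<in>UNIV. hess f x i k * v$i) = 0" for k
    proof -
      define c where "c = dirderiv f (axis k 1) x / d"
      have "(\<Sum>i\<in>UNIV. dirderiv f (axis i 1) x * (axis k 1 - c *\<^sub>R x)$i)
          = (\<Sum>i\<in>UNIV. dirderiv f (axis i 1) x * axis k 1 $ i) - c * (\<Sum>i\<in>UNIV. dirderiv f (axis i 1) x * x$i)"
        by (simp add: algebra_simps sum_subtractf sum_distrib_left)
      also have "(\<Sum>i\<in>UNIV. dirderiv f (axis i 1) x * axis k 1 $ i) = dirderiv f (axis k 1) x"
        by (rule sum_axis')
      also have "(\<Sum>i\<in>UNIV. dirderiv f (axis i 1) x * x$i) = d" using eul[OF x(1)] x(2) by simp
      finally have "axis k 1 - c *\<^sub>R x \<in> level_tangent f x"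
        using d0 by (simp add: level_tangent_def c_def)
      then have "(\<Sum>i\<in>UNIV. \<Sum>j\<in>UNIV. hess f x i j * v$i * (axis k 1 - c *\<^sub>R x)$j) = 0" by (rule W')
      then have "(\<Sum>i\<in>UNIV. \<Sum>j\<in>UNIV. hess f x i j * v$i * axis k 1 $ j) = 0"
        using Q_lin2[of "\<lambda>i j. hess f x i j" v "axis k 1" c x] Qvx by simp
      then show ?thesis by (simp add: Q_axis)
    qed
    define Hm where "Hm = (\<chi> i j. hess f x i j)"
    have Hv: "transpose Hm *v v = 0"
      using col by (simp add: Hm_def transpose_def matrix_vector_mult_def vec_eq_iff mult.commute)
    have "det (transpose Hm) \<noteq> 0" using nondeg[OF x(1)] by (simp add: Hm_def det_transpose)
    then have "invertible (transpose Hm)" by (simp add: invertible_det_nz)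
    then obtain B where "B ** transpose Hm = mat 1" using invertible_left_inverse by blast
    then have "\<forall>y. transpose Hm *v y = 0 \<longrightarrow> y = 0" using matrix_left_invertible_ker by blast
    then show "v = 0" using Hv by blast
  qed

  have fphi: "f (t powr (2/d) *\<^sub>R x) = t powr 2" if "t > 0" "x \<in> M" for t x
  proof -
    have "f (t powr (2/d) *\<^sub>R x) = (t powr (2/d)) powr d * f x" using that by (intro homog) (auto simp: M_def)
    also have "\<dots> = t powr (2/d * d)" using that by (simp add: M_def powr_powr)
    also have "2/d * d = 2" using d0 by simp
    finally show ?thesis .
  qed
  have psiM: "\<psi> y \<in> {0<..} \<times> M" if y: "y \<in> U" for y
  proof -
    have fy: "f y > 0" using pos[OF y] .
    have c: "f y powr (-1/d) > 0" using fy by simp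
    have "(f y powr (-1/d)) powr d = f y powr (-1/d * d)" by (simp add: powr_powr)
    also have "-1/d * d = -1" using d0 by simp
    finally have "(f y powr (-1/d)) powr d = inverse (f y)" using fy by (simp add: powr_minus)
    then have "f (f y powr (-1/d) *\<^sub>R y) = 1" using homog[OF y c] fy by simp
    moreover have "f y powr (-1/d) *\<^sub>R y \<in> U" using cone[OF y c] .
    ultimately show ?thesis using fy by (simp add: \<psi>_def M_def)
  qed
  have phipsi: "\<phi> (\<psi> y) = y" if y: "y \<in> U" for y
  proof -
    have fy: "f y > 0" using pos[OF y] .
    have "(f y powr (1/2)) powr (2/d) = f y powr (1/d)" by (simp add: powr_powr)
    moreover have "f y powr (1/d) * f y powr (-1/d) = f y powr (1/d + -1/d)" by (simp only: powr_add)
    ultimately have "(f y powr (1/2)) powr (2/d) * f y powr (-1/d) = f y powr (1/d + -1/d)" by simp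
    also have "1/d + -1/d = 0" by simp
    finally have "(f y powr (1/2)) powr (2/d) * f y powr (-1/d) = 1" using fy by simp
    then show ?thesis by (simp add: \<phi>_def \<psi>_def)
  qed
  have psiphi: "\<psi> (\<phi> (t, x)) = (t, x)" if "t > 0" "x \<in> M" for t x
  proof -
    have f2: "f (\<phi> (t, x)) = t powr 2" using fphi[OF that] by (simp add: \<phi>_def)
    have "(t powr 2) powr (1/2) = t" using that(1) by (simp add: powr_powr)
    moreover have "(t powr 2) powr (-1/d) * t powr (2/d) = 1"
    proof -
      have "(t powr 2) powr (-1/d) = t powr (2 * (-1/d))" by (simp add: powr_powr)
      then have "(t powr 2) powr (-1/d) * t powr (2/d) = t powr (2 * (-1/d)) * t powr (2/d)" by simp
      also have "\<dots> = t powr (2 * (-1/d) + 2/d)" by (simp only: powr_add)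
      also have "2 * (-1/d) + 2/d = 0" by simp
      finally show ?thesis using that(1) by simp
    qed
    ultimately show ?thesis using f2 by (simp add: \<psi>_def \<phi>_def)
  qed
  have phiU: "\<phi> p \<in> U" if "p \<in> {0<..} \<times> M" for p
    using that cone by (auto simp: \<phi>_def M_def)
  have P2: "bij_betw \<phi> ({0<..} \<times> M) U"
  proof (rule bij_betw_byWitness[where f'=\<psi>])
    show "\<forall>a\<in>{0<..} \<times> M. \<psi> (\<phi> a) = a" using psiphi by auto
    show "\<forall>a'\<in>U. \<phi> (\<psi> a') = a'" using phipsi by auto
    show "\<phi> ` ({0<..} \<times> M) \<subseteq> U" using phiU by blast
    show "\<psi> ` U \<subseteq> {0<..} \<times> M" using psiM by blast
  qed

  have S0: "open ({0::real<..} \<times> (UNIV :: (real^'n) set))" by (intro open_Times open_greaterThan open_UNIV)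
  have P3: "smooth_map_on ({0<..} \<times> UNIV) \<phi>"
    unfolding smooth_map_on_def smooth_real_on_def
  proof (intro ballI allI)
    fix e :: "real^'n" and k assume "e \<in> Basis"
    then obtain i where e: "e = axis i 1" using axis_inverse by blast
    have funeq: "(\<lambda>p. \<phi> p \<bullet> e) = (\<lambda>p. fst p powr (2/d) * (snd p $ i))"
      by (rule ext) (simp add: e \<phi>_def inner_axis)
    have L1: "Ck k ({0<..} \<times> UNIV) (\<lambda>p::real \<times> (real^'n). fst p)"
      by (rule Ck_linear[OF bounded_linear_fst])
    have L2: "Ck k ({0<..} \<times> UNIV) (\<lambda>p::real \<times> (real^'n). snd p $ i)"
      by (rule Ck_linear) (intro bounded_linear_compose[OF bounded_linear_vec_nth bounded_linear_snd])
    have "Ck k ({0<..} \<times> UNIV) (\<lambda>p::real \<times> (real^'n). fst p powr (2/d) * (snd p $ i))"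
      by (intro Ck_mult[OF S0] Ck_powr[OF S0] L1 L2) auto
    then show "Ck k ({0<..} \<times> UNIV) (\<lambda>p. \<phi> p \<bullet> e)" by (simp only: funeq)
  qed

  have P4: "smooth_map_on U \<psi>"
    unfolding smooth_map_on_def smooth_real_on_def
  proof (intro ballI allI)
    fix e :: "real \<times> (real^'n)" and k assume "e \<in> Basis"
    then consider "e = (1, 0)" | i where "e = (0, axis i 1)"
      unfolding Basis_prod_def using axis_inverse by auto
    then show "Ck k U (\<lambda>y. \<psi> y \<bullet> e)"
    proof cases
      case 1
      have funeq: "(\<lambda>y. \<psi> y \<bullet> e) = (\<lambda>y. f y powr (1/2))" by (rule ext) (simp add: 1 \<psi>_def)
      show ?thesis unfolding funeq using pos by (intro Ck_powr[OF openU Ck_all]) auto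
    next
      case (2 i)
      have funeq: "(\<lambda>y. \<psi> y \<bullet> e) = (\<lambda>y. f y powr (-1/d) * y $ i)"
        by (rule ext) (simp add: 2 \<psi>_def inner_axis)
      show ?thesis unfolding funeq using pos
        by (intro Ck_mult[OF openU] Ck_powr[OF openU Ck_all] Ck_linear bounded_linear_vec_nth) auto
    qed
  qed

  have P5: "\<forall>t>0. \<forall>x\<in>M. \<exists>\<phi>'. (\<phi> has_derivative \<phi>') (at (t, x)) \<and>
           (\<forall>a b. \<forall>v\<in>level_tangent f x. \<forall>w\<in>level_tangent f x.
              hess_metric d f (\<phi> (t, x)) (\<phi>' (a, v)) (\<phi>' (b, w))
                = - (4 / d\<^sup>2) * a * b + t\<^sup>2 * hess_metric d f x v w)"
  proof (intro allI impI ballI)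
    fix t :: real and x assume t: "t > 0" and xM: "x \<in> M"
    from xM have x: "x \<in> U" "f x = 1" by (auto simp: M_def)
    define c1 where "c1 = 2/d * t powr (2/d - 1)"
    define l where "l = t powr (2/d)"
    have l0: "l > 0" using t by (simp add: l_def)
    define \<phi>' where "\<phi>' = (\<lambda>q::real \<times> (real^'n). (fst q * c1) *\<^sub>R x + l *\<^sub>R snd q)"
    have hfst: "((\<lambda>p::real \<times> (real^'n). fst p) has_derivative (\<lambda>q. fst q)) (at (t, x))"
      by (rule bounded_linear_imp_has_derivative[OF bounded_linear_fst])
    have hsnd: "((\<lambda>p::real \<times> (real^'n). snd p) has_derivative (\<lambda>q. snd q)) (at (t, x))"
      by (rule bounded_linear_imp_has_derivative[OF bounded_linear_snd])
    have "((\<lambda>s. s powr (2/d)) has_real_derivative c1) (at t)"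
      unfolding c1_def by (rule has_real_derivative_powr[OF t])
    then have hp: "((\<lambda>s. s powr (2/d)) has_derivative (\<lambda>h. c1 * h)) (at (fst (t, x)))"
      by (simp add: has_field_derivative_def)
    have h1: "((\<lambda>p::real \<times> (real^'n). fst p powr (2/d)) has_derivative (\<lambda>q. fst q * c1)) (at (t, x))"
      using diff_chain_at[OF hfst hp] by (simp add: o_def mult.commute)
    have "(\<phi> has_derivative (\<lambda>h. fst (t, x) powr (2/d) *\<^sub>R snd h + (fst h * c1) *\<^sub>R snd (t, x))) (at (t, x))"
      unfolding \<phi>_def by (rule has_derivative_scaleR[OF h1 hsnd])
    moreover have "(\<lambda>h. fst (t, x) powr (2/d) *\<^sub>R snd h + (fst h * c1) *\<^sub>R snd (t, x)) = \<phi>'"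
      by (rule ext) (simp add: \<phi>'_def l_def)
    ultimately have hd: "(\<phi> has_derivative \<phi>') (at (t, x))" by simp
    have "hess_metric d f (\<phi> (t, x)) (\<phi>' (a, v)) (\<phi>' (b, w)) = - (4 / d\<^sup>2) * a * b + t\<^sup>2 * hess_metric d f x v w"
      if v: "v \<in> level_tangent f x" and w: "w \<in> level_tangent f x" for a b v w
    proof -
      let ?Q = "\<lambda>u1 u2. \<Sum>i\<in>UNIV. \<Sum>j\<in>UNIV. hess f x i j * u1$i * u2$j"
      define K where "K = - (1 / (d * (d - 1)))"
      have vt: "(\<Sum>i\<in>UNIV. dirderiv f (axis i 1) x * v$i) = 0" using v by (simp add: level_tangent_def)
      have wt: "(\<Sum>i\<in>UNIV. dirderiv f (axis i 1) x * w$i) = 0" using w by (simp add: level_tangent_def)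
      have Qxx: "?Q x x = (d - 1) * d"
        using Q_x2[of "\<lambda>i j. hess f x i j" x "d - 1" "\<lambda>i. dirderiv f (axis i 1) x" x] hB[OF x(1)] eul[OF x(1)] x(2)
        by simp
      have Qvx: "?Q v x = 0"
        using Q_x2[of "\<lambda>i j. hess f x i j" x "d - 1" "\<lambda>i. dirderiv f (axis i 1) x" v] hB[OF x(1)] vt by simp
      have Qxw: "?Q x w = 0"
        using Q_x1[of "\<lambda>i j. hess f x i j" x "d - 1" "\<lambda>i. dirderiv f (axis i 1) x" w] hA[OF x(1)] wt by simp
      have phi_tx: "\<phi> (t, x) = l *\<^sub>R x" by (simp add: \<phi>_def l_def)
      have "(\<Sum>i\<in>UNIV. \<Sum>j\<in>UNIV. hess f (l *\<^sub>R x) i j * (\<phi>' (a, v))$i * (\<phi>' (b, w))$j)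
          = l powr (d - 2) * ?Q (\<phi>' (a, v)) (\<phi>' (b, w))"
        by (simp add: hhom[OF x(1) l0] sum_distrib_left algebra_simps)
      also have "?Q (\<phi>' (a, v)) (\<phi>' (b, w)) = a*c1*(b*c1)*((d-1)*d) + l*l*?Q v w"
        using Q_expand[of "\<lambda>i j. hess f x i j" "a * c1" x l v "b * c1" l w] Qxx Qvx Qxw
        by (simp add: \<phi>'_def)
      finally have E: "hess_metric d f (\<phi> (t, x)) (\<phi>' (a, v)) (\<phi>' (b, w))
          = l powr (d - 2) * K * (a*c1*(b*c1)*((d-1)*d) + l*l*?Q v w)"
        by (simp add: hess_metric_def phi_tx K_def)
      have A1: "l powr (d - 2) * c1^2 = 4/d^2"
      proof -
        have c1sq: "c1^2 = (2/d)^2 * (t powr (2/d - 1))^2" unfolding c1_def by (rule power_mult_distrib)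
        have "l powr (d - 2) * c1^2 = (2/d)^2 * (l powr (d - 2) * (t powr (2/d - 1))^2)"
          by (simp only: c1sq mult.left_commute)
        also have "l powr (d - 2) * (t powr (2/d - 1))^2 = 1" using pw1[OF t d1] by (simp only: l_def)
        finally show ?thesis by (simp add: power_divide)
      qed
      have A2: "l powr (d - 2) * (l * l) = t^2" using pw2[OF t d1] by (simp add: l_def power2_eq_square)
      have A3: "K * ((d-1)*d) = -1" using d1 by (simp add: K_def field_simps)
      have "hess_metric d f x v w = K * ?Q v w" by (simp add: hess_metric_def K_def)
      then show ?thesis using E final_alg[OF A1 A2 A3] by simp
    qed
    with hd show "\<exists>\<phi>'. (\<phi> has_derivative \<phi>') (at (t, x)) \<and>
           (\<forall>a b. \<forall>v\<in>level_tangent f x. \<forall>w\<in>level_tangent f x.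
              hess_metric d f (\<phi> (t, x)) (\<phi>' (a, v)) (\<phi>' (b, w))
                = - (4 / d\<^sup>2) * a * b + t\<^sup>2 * hess_metric d f x v w)" by blast
  qed

  have P4': "\<exists>\<psi>. smooth_map_on U \<psi> \<and> (\<forall>y\<in>U. \<psi> y \<in> {0<..} \<times> M \<and> \<phi> (\<psi> y) = y)"
    using P4 psiM phipsi by blast
  show ?thesis
    using P1 P2 P3 P4' P5 unfolding Let_def M_def[symmetric] \<phi>_def by blast
qed

end
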